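(* Let $\omega=-\frac12+i\frac{\sqrt3}{2}$. Let $T$ be a triangle with vertices $A=a_1+a_2\omega$, $B=b_1+b_2\omega$ and $C=0$, where $a_1,a_2,b_1,b_2$ are nonnegative integers, and suppose $T$ is equable. Then each of the side lengths $|AC|$, $|BC|$, $|AB|$ of $T$ is of the form $\sqrt3\,n$ for some positive integer $n$.
   Context: A triangle is a non-degenerate triangle in the plane $\mathbb{C}\cong\mathbb{R}^2$. A triangle is called equable if its perimeter equals its area. *)

theory Defs
  imports "HOL-Analysis.Analysis"
begin

definition omega :: complex where
  "omega = Complex (-1/2) (sqrt 3 / 2)"

definition tri_area :: "complex \<Rightarrow> complex \<Rightarrow> complex \<Rightarrow> real" where
  "tri_area A B C = \<bar>Im ((B - A) * cnj (C - A))\<bar> / 2"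

definition tri_perimeter :: "complex \<Rightarrow> complex \<Rightarrow> complex \<Rightarrow> real" where
  "tri_perimeter A B C = dist A B + dist B C + dist C A"

definition nondegenerate :: "complex \<Rightarrow> complex \<Rightarrow> complex \<Rightarrow> bool" where
  "nondegenerate A B C \<longleftrightarrow> \<not> collinear {A, B, C}"

definition equable :: "complex \<Rightarrow> complex \<Rightarrow> complex \<Rightarrow> bool" where
  "equable A B C \<longleftrightarrow> nondegenerate A B C \<and> tri_perimeter A B C = tri_area A B C"

end

theory Submission
  imports Defs
begin

lemma rat_sq_int:
  fixes y :: real assumes "y \<in> \<rat>" "y^2 = of_int k" shows "y \<in> \<int>"
proof -
  obtain a b where ab: "y = of_int a / of_int b" "b > 0" "coprime a b"
    using Rats_cases'[OF assms(1)] by metis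
  have bn: "(of_int b :: real) \<noteq> 0" using ab(2) by simp
  have "(of_int a)^2 / (of_int b)^2 = (of_int k :: real)" using assms(2) unfolding ab(1) power_divide .
  hence "(of_int a)^2 = (of_int k * (of_int b)^2 :: real)" using bn by (simp add: divide_eq_eq)
  hence "(of_int (a^2) :: real) = of_int (k * b^2)" by simp
  hence eq: "a^2 = k * b^2" by (simp only: of_int_eq_iff)
  have d: "b dvd a^2" unfolding eq by simp
  have c: "coprime (a^2) b" using ab(3) by simp
  have "is_unit b" using coprime_absorb_right[OF d] c by simp
  hence "b = 1" using ab(2) by simp
  thus ?thesis using ab(1) by simp
qed

lemma three_sqrt_rat:
  fixes x y z :: real
  assumes "x \<ge> 0" "y \<ge> 0" "z \<ge> 0" "x^2 \<in> \<rat>" "y^2 \<in> \<rat>" "z^2 \<in> \<rat>" "x+y+z \<in> \<rat>"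
  shows "z \<in> \<rat>"
proof -
  define s where "s = x+y+z"
  have sQ: "s \<in> \<rat>" using assms s_def by simp
  show ?thesis
  proof (cases "s = 0 \<or> z = 0")
    case True
    have "z = 0" using True assms unfolding s_def by (elim disjE) linarith+
    thus ?thesis by simp
  next
    case False
    hence sp: "s > 0" "z > 0" using assms s_def by auto
    define qq where "qq = 2*x*y + 2 * s * z"
    have qeq: "qq = s^2 + z^2 - x^2 - y^2" unfolding qq_def s_def by (simp add: power2_eq_square algebra_simps)
    have qQ: "qq \<in> \<rat>" unfolding qeq using assms sQ by (intro Rats_add Rats_diff) auto
    have qp: "qq > 0" unfolding qq_def using sp assms by (simp add: add_nonneg_pos)
    define w where "w = x*y*z"
    have "qq^2 = 4*x^2*y^2 + 8 * s * w + 4 * s^2*z^2" unfolding w_def qq_def by (simp add: power2_eq_square algebra_simps)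
    hence "w = (qq^2 - 4*x^2*y^2 - 4 * s^2*z^2)/(8 * s)" using sp by simp
    moreover have "x^2*y^2 \<in> \<rat>" using assms by simp
    ultimately have wQ: "w \<in> \<rat>" using assms qQ sQ by simp
    have "2*w = qq*z - 2 * s * z^2" unfolding w_def qq_def by (simp add: power2_eq_square algebra_simps)
    hence zeq: "z = (2*w + 2 * s * z^2)/qq" using qp by (simp add: field_simps)
    have "(2*w + 2 * s * z^2)/qq \<in> \<rat>" using wQ assms sQ qQ by simp
    thus ?thesis using zeq by simp
  qed
qed

lemma side_lemma:
  fixes d :: real and m :: int
  assumes "d > 0" "d^2 = of_int m" "d / sqrt 3 \<in> \<rat>"
  shows "\<exists>n::nat. n > 0 \<and> d = sqrt 3 * real n"
proof -
  have s3: "sqrt 3 * sqrt 3 = (3::real)" by simp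
  have s3p: "sqrt 3 > (0::real)" by simp
  define y where "y = sqrt 3 * d"
  have h1: "3 * (d / sqrt 3) * sqrt 3 = 3 * d" using s3p by simp
  have h2: "y * sqrt 3 = 3 * d" unfolding y_def by (metis s3 mult.commute mult.assoc)
  have "y = 3 * (d / sqrt 3)" using h1 h2 s3p by (metis mult_right_cancel less_irrefl)
  moreover have "3 * (d / sqrt 3) \<in> \<rat>" by (rule Rats_mult) (simp_all add: assms(3))
  ultimately have yQ: "y \<in> \<rat>" by simp
  have ysq: "y^2 = of_int (3*m)" unfolding y_def using assms(2) by (simp add: power_mult_distrib)
  hence "y \<in> \<int>" using rat_sq_int yQ by blast
  then obtain k where k: "y = of_int k" by (auto elim: Ints_cases)
  have "y > 0" unfolding y_def using assms(1) s3p by simp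
  hence kp: "k > 0" using k by simp
  have "of_int (k^2) = (of_int (3*m) :: real)" using k ysq by simp
  hence "k^2 = 3*m" by (metis of_int_eq_iff)
  hence "(3::int) dvd k^2" by simp
  hence "(3::int) dvd k" using prime_dvd_power_int[of 3 k 2] by simp
  then obtain j where j: "k = 3*j" by auto
  have jp: "j > 0" using kp j by simp
  have e: "sqrt 3 * d = (sqrt 3 * sqrt 3) * of_int j" using k j unfolding y_def by (simp add: s3)
  have "d = sqrt 3 * of_int j"
  proof -
    have "sqrt 3 * d = sqrt 3 * (sqrt 3 * of_int j)" using e by (simp only: mult.assoc)
    thus ?thesis using s3p by simp
  qed
  thus ?thesis using jp by (intro exI[of _ "nat j"]) simp
qed

lemma norm_eis:
  fixes u v :: int
  shows "(cmod (of_int u + of_int v * omega))^2 = of_int (u^2 - u * v + v^2)"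
proof -
  have e: "of_int u + of_int v * omega = Complex (of_int u - of_int v / 2) (of_int v * sqrt 3 / 2)"
    unfolding omega_def by (simp add: complex_eq_iff)
  have q: "(of_int v * sqrt 3 / 2)^2 = 3 * (of_int v)^2 / (4::real)"
    by (simp add: power_mult_distrib power_divide)
  have "(cmod (of_int u + of_int v * omega))^2 = (of_int u - of_int v / 2)^2 + (of_int v * sqrt 3 / 2)^2"
    unfolding e cmod_power2 by simp
  also have "\<dots> = (of_int u - of_int v / 2)^2 + 3 * (of_int v)^2 / 4" by (simp only: q)
  also have "\<dots> = (of_int u)^2 - of_int u * of_int v + (of_int v)^2"
    by (simp add: power2_eq_square algebra_simps)
  also have "\<dots> = of_int (u^2 - u * v + v^2)" by simp
  finally show ?thesis .
qed

theorem mainTheorem2: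
  fixes a1 a2 b1 b2 :: nat
  defines "A \<equiv> of_nat a1 + of_nat a2 * omega"
      and "B \<equiv> of_nat b1 + of_nat b2 * omega"
  assumes "equable A B 0"
  shows "(\<exists>n::nat. n > 0 \<and> dist A 0 = sqrt 3 * real n)
       \<and> (\<exists>n::nat. n > 0 \<and> dist B 0 = sqrt 3 * real n)
       \<and> (\<exists>n::nat. n > 0 \<and> dist A B = sqrt 3 * real n)"
proof -
  have eq: "dist A B + dist B 0 + dist 0 A = tri_area A B 0" and nd: "\<not> collinear {A, B, 0}"
    using assms(3) unfolding equable_def tri_perimeter_def nondegenerate_def by auto
  have An: "A \<noteq> 0"
  proof
    assume "A = 0" hence "{A, B, 0} = {0, B}" by auto
    thus False using nd by simp
  qed
  have Bn: "B \<noteq> 0"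
  proof
    assume "B = 0" hence "{A, B, 0} = {A, 0}" by auto
    thus False using nd by simp
  qed
  have ABn: "A \<noteq> B"
  proof
    assume "A = B" hence "{A, B, 0} = {A, 0}" by auto
    thus False using nd by simp
  qed
  have Ai: "A = of_int (int a1) + of_int (int a2) * omega" unfolding A_def by simp
  have Bi: "B = of_int (int b1) + of_int (int b2) * omega" unfolding B_def by simp
  have ABi: "A - B = of_int (int a1 - int b1) + of_int (int a2 - int b2) * omega"
    unfolding A_def B_def by (simp add: algebra_simps)
  have ImG: "Im ((B - A) * cnj (0 - A)) = Re B * Im A - Re A * Im B" by (simp add: algebra_simps)
  have ReA: "Re A = real a1 - real a2 / 2" and ImA: "Im A = real a2 * sqrt 3 / 2"
    unfolding A_def omega_def by simp_all
  have ReB: "Re B = real b1 - real b2 / 2" and ImB: "Im B = real b2 * sqrt 3 / 2"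
    unfolding B_def omega_def by simp_all
  have E: "Re B * Im A - Re A * Im B = sqrt 3 / 2 * (real a2 * real b1 - real a1 * real b2)"
    unfolding ReA ImA ReB ImB by (simp add: field_simps)
  have "tri_area A B 0 = \<bar>sqrt 3 / 2 * (real a2 * real b1 - real a1 * real b2)\<bar> / 2"
    unfolding tri_area_def ImG E ..
  also have "\<dots> = sqrt 3 / 4 * \<bar>real a2 * real b1 - real a1 * real b2\<bar>"
    by (simp add: abs_mult)
  also have "\<bar>real a2 * real b1 - real a1 * real b2\<bar> = \<bar>of_int (int a1 * int b2 - int a2 * int b1)\<bar>"
    by simp
  finally have area: "tri_area A B 0 = sqrt 3 / 4 * \<bar>of_int (int a1 * int b2 - int a2 * int b1)\<bar>" .
  define x where "x = dist A 0 / sqrt 3"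
  define y where "y = dist B 0 / sqrt 3"
  define z where "z = dist A B / sqrt 3"
  have dA2: "(dist A 0)^2 = of_int (int a1^2 - int a1 * int a2 + int a2^2)"
    unfolding dist_norm diff_zero Ai by (rule norm_eis)
  have dB2: "(dist B 0)^2 = of_int (int b1^2 - int b1 * int b2 + int b2^2)"
    unfolding dist_norm diff_zero Bi by (rule norm_eis)
  have dAB2: "(dist A B)^2 = of_int ((int a1 - int b1)^2 - (int a1 - int b1) * (int a2 - int b2) + (int a2 - int b2)^2)"
    unfolding dist_norm ABi by (rule norm_eis)
  have x2: "x^2 \<in> \<rat>" unfolding x_def using dA2 by (simp add: power_divide)
  have y2: "y^2 \<in> \<rat>" unfolding y_def using dB2 by (simp add: power_divide)
  have z2: "z^2 \<in> \<rat>" unfolding z_def using dAB2 by (simp add: power_divide)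
  have "x + y + z = (dist A B + dist B 0 + dist 0 A) / sqrt 3"
    unfolding x_def y_def z_def by (simp add: dist_commute add_divide_distrib)
  also have "\<dots> = \<bar>of_int (int a1 * int b2 - int a2 * int b1)\<bar> / 4"
    unfolding eq area by simp
  finally have sx: "x + y + z = of_int \<bar>int a1 * int b2 - int a2 * int b1\<bar> / 4" by simp
  have sQ: "x + y + z \<in> \<rat>" unfolding sx by (intro Rats_divide) auto
  have xp: "x \<ge> 0" "y \<ge> 0" "z \<ge> 0" unfolding x_def y_def z_def by auto
  have zQ: "z \<in> \<rat>" using three_sqrt_rat[OF xp x2 y2 z2 sQ] .
  have e1: "x + z + y = x + y + z" and e2: "y + z + x = x + y + z" by linarith+
  have yQ: "y \<in> \<rat>" using three_sqrt_rat[of x z y] xp x2 y2 z2 sQ unfolding e1 by blast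
  have xQ: "x \<in> \<rat>" using three_sqrt_rat[of y z x] xp x2 y2 z2 sQ unfolding e2 by blast
  have pA: "dist A 0 > 0" using An by simp
  have pB: "dist B 0 > 0" using Bn by simp
  have pAB: "dist A B > 0" using ABn by simp
  show ?thesis
    using side_lemma[OF pA dA2 xQ[unfolded x_def]] side_lemma[OF pB dB2 yQ[unfolded y_def]]
      side_lemma[OF pAB dAB2 zQ[unfolded z_def]] by blast
qed

end
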